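(* Let $n>4$ and let $\mathcal{L}\subseteq\mathcal{L}_n$ be a linear subspace that is a Jordan algebra, is invariant under the conjugation action of $S_n$, contains $J$, and contains $W_n:=\{Q=(q_{ij})\in\mathcal{L}_n: Q=Q^T,\ q_{ii}=0\ \forall i\}$ (the submodule isomorphic to $\{n-2,2\}$). Then $\mathrm{Symm}_n\subseteq\mathcal{L}$.
   Context: $\mathbf{1}\in\mathbb{R}^n$ is the all-ones column vector; $\mathcal{L}_n=\{Q\in \mathrm{Mat}_n(\mathbb{R}): Q\mathbf{1}=0\}$; $J:=\frac1n\mathbf{1}\mathbf{1}^T-I_n$. $\mathrm{Symm}_n$ is the space of symmetric matrices in $\mathcal{L}_n$. For $\sigma\in S_n$, $K_\sigma$ is the permutation matrix with $e_iK_\sigma=e_{\sigma(i)}$, and $S_n$ acts by $\sigma\cdot X=K_\sigma^TXK_\sigma$. A Jordan algebra is a subspace closed under $AB+BA$. *)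

theory Defs
  imports "HOL-Analysis.Analysis" "HOL-Combinatorics.Permutations"
begin

definition ones :: "real ^ 'n" where
  "ones = (\<chi> i. 1)"

definition Ln :: "(real ^ 'n ^ 'n) set" where
  "Ln = {Q. Q *v ones = 0}"

definition Jmat :: "real ^ 'n ^ 'n" where
  "Jmat = (\<chi> i j. 1 / real CARD('n) - (if i = j then 1 else 0))"

definition Symm :: "(real ^ 'n ^ 'n) set" where
  "Symm = {Q \<in> Ln. transpose Q = Q}"

definition Wn :: "(real ^ 'n ^ 'n) set" where
  "Wn = {Q \<in> Ln. transpose Q = Q \<and> (\<forall>i. Q $ i $ i = 0)}"

text \<open>Permutation matrix: row i of K_sigma is e_(sigma i), i.e. e_i K_sigma = e_(sigma i).\<close>
definition Kperm :: "('n \<Rightarrow> 'n) \<Rightarrow> real ^ 'n ^ 'n" where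
  "Kperm \<sigma> = (\<chi> i j. if \<sigma> i = j then 1 else 0)"

definition perm_act :: "('n \<Rightarrow> 'n) \<Rightarrow> real ^ 'n ^ 'n \<Rightarrow> real ^ 'n ^ 'n" where
  "perm_act \<sigma> X = transpose (Kperm \<sigma>) ** X ** Kperm \<sigma>"

definition jordan_closed :: "(real ^ 'n ^ 'n) set \<Rightarrow> bool" where
  "jordan_closed L \<longleftrightarrow> (\<forall>A\<in>L. \<forall>B\<in>L. A ** B + B ** A \<in> L)"

end

theory Submission
  imports Defs
begin

definition Em :: "'n \<Rightarrow> 'n \<Rightarrow> real ^ 'n ^ 'n" where
  "Em a b = (\<chi> x y. (if x = a \<and> y = b then 1 else 0) + (if x = b \<and> y = a then 1 else 0))"

definition cyc :: "'n \<Rightarrow> 'n \<Rightarrow> 'n \<Rightarrow> 'n \<Rightarrow> real ^ 'n ^ 'n" where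
  "cyc p q r s = Em p q - Em q r + Em r s - Em s p"

lemma subspace_Ln: "subspace (Ln :: (real ^ 'n ^ 'n) set)"
proof -
  have "(c *\<^sub>R A) *v x = c *\<^sub>R (A *v x)" for c and A :: "real ^ 'n ^ 'n" and x
    by (simp add: matrix_vector_mult_def vec_eq_iff sum_distrib_left mult.assoc)
  then show ?thesis unfolding subspace_def Ln_def
    by (simp add: matrix_vector_mult_add_rdistrib)
qed

lemma subspace_sym: "subspace {Q :: real ^ 'n ^ 'n. transpose Q = Q}"
  unfolding subspace_def
  by (simp add: transpose_scalar vec_eq_iff transpose_def)

lemma Em_row: "(\<Sum>y\<in>UNIV. Em a b $ x $ y) = (if x = a then 1 else 0) + (if x = b then 1 else 0)"
  unfolding Em_def by (simp add: sum.distrib)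

lemma cyc_Ln: "cyc p q r s \<in> Ln"
proof -
  have "(cyc p q r s *v ones) $ x = 0" for x
    by (simp add: matrix_vector_mult_def ones_def cyc_def sum_subtractf sum.distrib Em_row)
  then show ?thesis unfolding Ln_def by (simp add: vec_eq_iff)
qed

lemma cyc_entry: "cyc p q r s $ x $ y =
     (if x = p \<and> y = q then 1 else 0) + (if x = q \<and> y = p then 1 else 0)
   - (if x = q \<and> y = r then 1 else 0) - (if x = r \<and> y = q then 1 else 0)
   + (if x = r \<and> y = s then 1 else 0) + (if x = s \<and> y = r then 1 else 0)
   - (if x = s \<and> y = p then 1 else 0) - (if x = p \<and> y = s then 1 else 0)"
  by (simp add: cyc_def Em_def)

lemma Em_sym: "transpose (Em a b) = Em a b"
  unfolding Em_def transpose_def by (simp add: vec_eq_iff add.commute conj_commute)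

lemma cyc_sym: "transpose (cyc p q r s) = cyc p q r s"
proof -
  have "cyc p q r s \<in> {Q. transpose Q = Q}" unfolding cyc_def
    by (intro subspace_add[OF subspace_sym] subspace_diff[OF subspace_sym]) (simp_all add: Em_sym)
  then show ?thesis by simp
qed

lemma cyc_Wn:
  assumes "p \<noteq> q" "q \<noteq> r" "r \<noteq> s" "s \<noteq> p"
  shows "cyc p q r s \<in> Wn"
proof -
  have "cyc p q r s $ i $ i = 0" for i using assms by (simp add: cyc_entry)
  then show ?thesis using cyc_Ln cyc_sym unfolding Wn_def by blast
qed

lemma row_sq:
  fixes A :: "real ^ 'n ^ 'n"
  assumes "\<And>y. A $ x $ y = (if y = a then 1 else 0) - (if y = b then 1 else 0)" "a \<noteq> b"
  shows "(\<Sum>y\<in>UNIV. A $ x $ y * A $ x $ y) = 2"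
proof -
  have "A $ x $ y * A $ x $ y = (if y = a then 1 else 0) + (if y = b then 1 else 0)" for y
    using assms by (cases "y = a"; cases "y = b"; simp)
  then show ?thesis by (simp add: sum.distrib)
qed

lemma cyc_sq_diag:
  assumes d: "distinct [p,q,r,s]"
  shows "(cyc p q r s ** cyc p q r s) $ x $ x =
     2 * ((if x = p then 1 else 0) + (if x = q then 1 else 0) + (if x = r then 1 else 0) + (if x = s then 1 else 0))"
proof -
  have sym: "cyc p q r s $ y $ x = cyc p q r s $ x $ y" for y
    using cyc_sym[of p q r s] by (simp add: transpose_def vec_eq_iff)
  have e: "(cyc p q r s ** cyc p q r s) $ x $ x = (\<Sum>y\<in>UNIV. cyc p q r s $ x $ y * cyc p q r s $ x $ y)"
    by (simp add: matrix_matrix_mult_def sym)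
  show ?thesis
  proof (cases "x = p \<or> x = q \<or> x = r \<or> x = s")
    case True
    then consider "x = p" | "x = q" | "x = r" | "x = s" by blast
    then show ?thesis
    proof cases
      case 1
      have "(\<Sum>y\<in>UNIV. cyc p q r s $ x $ y * cyc p q r s $ x $ y) = 2"
        by (rule row_sq[of _ _ q s]) (use d 1 in \<open>auto simp: cyc_entry\<close>)
      then show ?thesis using e d 1 by auto
    next
      case 2
      have "(\<Sum>y\<in>UNIV. cyc p q r s $ x $ y * cyc p q r s $ x $ y) = 2"
        by (rule row_sq[of _ _ p r]) (use d 2 in \<open>auto simp: cyc_entry\<close>)
      then show ?thesis using e d 2 by auto
    next
      case 3
      have "(\<Sum>y\<in>UNIV. cyc p q r s $ x $ y * cyc p q r s $ x $ y) = 2"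
        by (rule row_sq[of _ _ s q]) (use d 3 in \<open>auto simp: cyc_entry\<close>)
      then show ?thesis using e d 3 by auto
    next
      case 4
      have "(\<Sum>y\<in>UNIV. cyc p q r s $ x $ y * cyc p q r s $ x $ y) = 2"
        by (rule row_sq[of _ _ r p]) (use d 4 in \<open>auto simp: cyc_entry\<close>)
      then show ?thesis using e d 4 by auto
    qed
  next
    case False
    then have "cyc p q r s $ x $ y = 0" for y by (simp add: cyc_entry)
    then show ?thesis using e False by simp
  qed
qed

lemma three_distinct:
  assumes "card (A :: 'a set) \<ge> 3" "finite A"
  obtains a b c where "a \<in> A" "b \<in> A" "c \<in> A" "a \<noteq> b" "b \<noteq> c" "a \<noteq> c"
proof -
  obtain B where "B \<subseteq> A" "card B = 3" using obtain_subset_with_card_n assms by metis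
  then show ?thesis using that unfolding card_3_iff by auto
qed

theorem mainTheorem15:
  fixes L :: "(real ^ 'n ^ 'n) set"
  assumes "CARD('n) > 4"
    and "subspace L"
    and "L \<subseteq> Ln"
    and "jordan_closed L"
    and "\<And>\<sigma> X. \<sigma> permutes (UNIV :: 'n set) \<Longrightarrow> X \<in> L \<Longrightarrow> perm_act \<sigma> X \<in> L"
    and "Jmat \<in> L"
    and "Wn \<subseteq> L"
  shows "Symm \<subseteq> L"
proof
  note sL = assms(2)
  define N where "N p q r s = cyc p q r s ** cyc p q r s + cyc p q r s ** cyc p q r s" for p q r s :: 'n
  have NL: "N p q r s \<in> L" if "distinct [p,q,r,s]" for p q r s
  proof -
    have "cyc p q r s \<in> L" using cyc_Wn[of p q r s] that assms(7) by auto
    then show ?thesis using assms(4) unfolding jordan_closed_def N_def by blast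
  qed
  have Nsym: "transpose (N p q r s) = N p q r s" for p q r s
  proof -
    have T: "transpose (cyc p q r s ** cyc p q r s) = cyc p q r s ** cyc p q r s"
      by (simp add: matrix_transpose_mul cyc_sym)
    have "N p q r s \<in> {Q. transpose Q = Q}"
      unfolding N_def by (rule subspace_add[OF subspace_sym]) (simp_all add: T)
    then show ?thesis by simp
  qed
  have Ndiag: "N p q r s $ x $ x = 4 * ((if x = p then 1 else 0) + (if x = q then 1 else 0) + (if x = r then 1 else 0) + (if x = s then 1 else 0))"
    if "distinct [p,q,r,s]" for p q r s x
    unfolding N_def using cyc_sq_diag[OF that, of x] by simp
  have Dex: "\<exists>D. D \<in> L \<and> transpose D = D \<and> (\<forall>x. D $ x $ x = (if x = m then 1 else 0) - (if x = z0 then 1 else 0))"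
    if "m \<noteq> z0" for m z0 :: 'n
  proof -
    have "card (UNIV - {m, z0}) = CARD('n) - 2" using that by (simp add: card_Diff_subset)
    then have "card (UNIV - {m, z0}) \<ge> 3" using assms(1) by simp
    then obtain a b c where abc: "a \<in> UNIV - {m,z0}" "b \<in> UNIV - {m,z0}" "c \<in> UNIV - {m,z0}" "a \<noteq> b" "b \<noteq> c" "a \<noteq> c"
      using three_distinct[of "UNIV - {m,z0}"] by auto
    have d1: "distinct [m,a,b,c]" and d2: "distinct [z0,a,b,c]" using abc that by auto
    define D where "D = (1/4) *\<^sub>R (N m a b c - N z0 a b c)"
    have "D \<in> L" unfolding D_def using NL[OF d1] NL[OF d2] sL
      by (intro subspace_scale subspace_diff) auto
    moreover have "transpose D = D" unfolding D_def
      by (simp add: transpose_scalar vec_eq_iff transpose_def Nsym[unfolded transpose_def vec_eq_iff, simplified])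
    moreover have "D $ x $ x = (if x = m then 1 else 0) - (if x = z0 then 1 else 0)" for x
      unfolding D_def using Ndiag[OF d1, of x] Ndiag[OF d2, of x] abc that by auto
    ultimately show ?thesis by blast
  qed
  fix Q :: "real ^ 'n ^ 'n" assume Q: "Q \<in> Symm"
  obtain z0 :: 'n where True by simp
  have "\<forall>m\<in>UNIV - {z0}. \<exists>D. D \<in> L \<and> transpose D = D \<and> (\<forall>x. D $ x $ x = (if x = m then 1 else 0) - (if x = z0 then 1 else 0))"
    using Dex by blast
  then obtain Df :: "'n \<Rightarrow> real ^ 'n ^ 'n" where Df: "\<And>m::'n. m \<in> UNIV - {z0} \<Longrightarrow> Df m \<in> L \<and> transpose (Df m) = Df m \<and> (\<forall>x. Df m $ x $ x = (if x = m then 1 else 0) - (if x = z0 then 1 else 0))"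
    by metis
  define n where "n = real CARD('n)"
  have n4: "n > 4" using assms(1) unfolding n_def by simp
  define d where "d x = Q $ x $ x - (\<Sum>y\<in>UNIV. Q $ y $ y) / n" for x
  define c where "c = (\<Sum>y\<in>UNIV. Q $ y $ y) / (1 - n)"
  define R where "R = c *\<^sub>R Jmat + (\<Sum>m\<in>UNIV - {z0}. d m *\<^sub>R Df m)"
  have RL: "R \<in> L" unfolding R_def using sL assms(6) Df
    by (intro subspace_add subspace_scale subspace_sum) auto
  have symS: "subspace {Q :: real ^ 'n ^ 'n. transpose Q = Q}" by (rule subspace_sym)
  have Jsym: "transpose Jmat = Jmat" by (auto simp: Jmat_def transpose_def vec_eq_iff)
  have Rsym: "transpose R = R"
  proof -
    have "R \<in> {Q. transpose Q = Q}" unfolding R_def using symS Jsym Df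
      by (intro subspace_add subspace_scale subspace_sum) auto
    then show ?thesis by simp
  qed
  have sumd: "(\<Sum>x\<in>UNIV. d x) = 0"
    unfolding d_def using n4 by (simp add: sum_subtractf n_def)
  have Rdiag: "R $ x $ x = Q $ x $ x" for x
  proof -
    have J: "c * Jmat $ x $ x = (\<Sum>y\<in>UNIV. Q $ y $ y) / n"
      unfolding c_def Jmat_def using n4 by (simp add: n_def[symmetric] field_simps)
    have S: "(\<Sum>m\<in>UNIV - {z0}. d m * Df m $ x $ x) = d x"
    proof (cases "x = z0")
      case True
      have "(\<Sum>m\<in>UNIV - {z0}. d m * Df m $ x $ x) = (\<Sum>m\<in>UNIV - {z0}. - d m)"
        using Df True by (intro sum.cong) auto
      also have "\<dots> = - (\<Sum>m\<in>UNIV - {z0}. d m)" by (simp add: sum_negf)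
      also have "(\<Sum>m\<in>UNIV - {z0}. d m) = (\<Sum>m\<in>UNIV. d m) - d z0"
        by (simp add: sum_diff1)
      finally show ?thesis using sumd True by simp
    next
      case False
      have "(\<Sum>m\<in>UNIV - {z0}. d m * Df m $ x $ x) = (\<Sum>m\<in>UNIV - {z0}. if m = x then d m else 0)"
        using Df False by (intro sum.cong) auto
      also have "\<dots> = d x" using False by (simp add: sum.delta')
      finally show ?thesis .
    qed
    show ?thesis unfolding R_def using J S by (simp add: d_def)
  qed
  have QR: "Q - R \<in> Wn"
  proof -
    have "Q \<in> Ln" using Q unfolding Symm_def by simp
    moreover have "R \<in> Ln" using RL assms(3) by auto
    ultimately have "Q - R \<in> Ln" by (rule subspace_diff[OF subspace_Ln])
    moreover have "transpose (Q - R) = Q - R" using Q Rsym unfolding Symm_def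
      by (simp add: transpose_def vec_eq_iff)
    ultimately show ?thesis unfolding Wn_def using Rdiag by simp
  qed
  then have "Q - R \<in> L" using assms(7) by auto
  then have "(Q - R) + R \<in> L" using RL by (rule subspace_add[OF sL])
  then show "Q \<in> L" by simp
qed

end
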